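(* Let $(\alpha,\omega,\beta)$ be an irreducible feasible endpoint constraint for which equality holds in $\sum_{i=0}^Ii\omega_i+(I+1)\omega_{I+}\le\sum_{k}k\alpha_k+\beta$, and let $\pi^*$ be the unique minimizer of $\sum_{k\in\mathcal{K}}\alpha_kD(\pi_{(k)}\|\mathcal{P}(\beta))$ subject to $\sum_{k\in\mathcal{K}}\alpha_k\sum_jj\pi_{k,j}=\beta$ and $\omega_i=\sum_{k\le i,k\in\mathcal{K}}\alpha_k\pi_{k,i-k}$ ($0\le i\le I$). Then there exist positive constants $\{D_k\}_{k\in\mathcal{K}}$ and $\{W_i\}_{i\in\mathcal{I}(\omega)}$ such that $$\pi^*_{k,j}=\begin{cases}D_k\mathcal{P}_j(\beta)W_{k+j},& k\in\mathcal{K},\ k+j\in\mathcal{I}(\omega),\\ 0,&\text{otherwise.}\end{cases}$$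
   Context: Fix $I\ge0$, $\beta>0$. $\alpha,\omega\in S_I=\{\gamma\in\mathbb{R}^{I+2}:\gamma_j\ge0,\sum\gamma_j=1\}$, components $\alpha_0,\dots,\alpha_{I+1}$ ($\alpha_0>0$), $\omega_0,\dots,\omega_I,\omega_{I+}$. $\mathcal{K}=\{k:\alpha_k>0\}$. Feasible: $\sum_{j\le i}\alpha_j\ge\sum_{j\le i}\omega_j$ ($i=0,\dots,I$) and $\sum_{i=0}^Ii\omega_i+(I+1)\omega_{I+}\le\sum_kk\alpha_k+\beta$; irreducible: the first inequalities strict for $i<I$. Standing convention of the paper: in the equality (polynomial) case the problem is formulated (replacing $I$ by $I+1$ if needed) so that $\omega_{I+}=0$. $\pi_{(k)}=(\pi_{k,j})_{j\ge0}$ are probability distributions on the nonnegative integers; $\mathcal{P}_j(t)=e^{-t}t^j/j!$; $D$ is relative entropy. $\mathcal{I}(\omega)$: integers $i\ge0$ with $i\le I,\omega_i>0$, or $i>I,\omega_{I+}>0$. *)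

theory Defs
  imports "HOL-Analysis.Analysis"
begin

definition poisson :: "nat \<Rightarrow> real \<Rightarrow> real" where
  "poisson j t = exp (- t) * t ^ j / fact j"

text \<open>Relative entropy D(p||q) = sum_j p_j ln(p_j/q_j) of distributions on the
  nonnegative integers, with value in [0,\<infinity>]; 0 ln 0 = 0 (automatic since 0 * x = 0).
  The series is +\<infinity> when it does not converge (its negative part is always summable).\<close>
definition rel_entropy :: "(nat \<Rightarrow> real) \<Rightarrow> (nat \<Rightarrow> real) \<Rightarrow> ereal" where
  "rel_entropy p q =
     (if summable (\<lambda>j. p j * ln (p j / q j))
      then ereal (\<Sum>j. p j * ln (p j / q j)) else \<infinity>)"

definition prob_dist :: "(nat \<Rightarrow> real) \<Rightarrow> bool" where
  "prob_dist p \<longleftrightarrow> (\<forall>j. 0 \<le> p j) \<and> p sums 1"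

definition Kset :: "nat \<Rightarrow> (nat \<Rightarrow> real) \<Rightarrow> nat set" where
  "Kset I \<alpha> = {k. k \<le> Suc I \<and> 0 < \<alpha> k}"

text \<open>The index set I(omega); omega_0..omega_I given by \<omega>, omega_{I+} by \<omega>p.\<close>
definition Iset :: "nat \<Rightarrow> (nat \<Rightarrow> real) \<Rightarrow> real \<Rightarrow> nat set" where
  "Iset I \<omega> \<omega>p = {i. (i \<le> I \<and> 0 < \<omega> i) \<or> (I < i \<and> 0 < \<omega>p)}"

definition pi_feasible ::
  "nat \<Rightarrow> (nat \<Rightarrow> real) \<Rightarrow> (nat \<Rightarrow> real) \<Rightarrow> real \<Rightarrow> (nat \<Rightarrow> nat \<Rightarrow> real) \<Rightarrow> bool" where
  "pi_feasible I \<alpha> \<omega> \<beta> \<pi> \<longleftrightarrow>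
     (\<forall>k\<in>Kset I \<alpha>. prob_dist (\<pi> k) \<and> summable (\<lambda>j. real j * \<pi> k j)) \<and>
     (\<Sum>k\<in>Kset I \<alpha>. \<alpha> k * (\<Sum>j. real j * \<pi> k j)) = \<beta> \<and>
     (\<forall>i\<le>I. \<omega> i = (\<Sum>k\<in>{k\<in>Kset I \<alpha>. k \<le> i}. \<alpha> k * \<pi> k (i - k)))"

definition objective ::
  "nat \<Rightarrow> (nat \<Rightarrow> real) \<Rightarrow> real \<Rightarrow> (nat \<Rightarrow> nat \<Rightarrow> real) \<Rightarrow> ereal" where
  "objective I \<alpha> \<beta> \<pi> =
     (\<Sum>k\<in>Kset I \<alpha>. ereal (\<alpha> k) * rel_entropy (\<pi> k) (\<lambda>j. poisson j \<beta>))"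

end

theory Submission imports Defs begin

lemma sum_swap_tri:
  fixes g :: "nat \<Rightarrow> nat \<Rightarrow> real"
  shows "(\<Sum>i\<le>n. \<Sum>k\<in>{k\<in>K. k\<le>i}. g k (i-k)) = (\<Sum>k\<in>{k\<in>K. k \<le> n}. \<Sum>j\<le>n-k. g k j)"
proof -
  have "(\<Sum>i\<le>n. \<Sum>k\<in>{k\<in>K. k\<le>i}. g k (i-k)) = (\<Sum>(i,k)\<in>Sigma {..n} (\<lambda>i. {k\<in>K. k\<le>i}). g k (i-k))"
    by (rule sum.Sigma) auto
  also have "\<dots> = (\<Sum>(k,j)\<in>Sigma {k\<in>K. k \<le> n} (\<lambda>k. {..n-k}). g k j)"
    by (rule sum.reindex_bij_witness[where i="\<lambda>(k,j). (k+j,k)" and j="\<lambda>(i,k). (k,i-k)"]) auto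
  also have "\<dots> = (\<Sum>k\<in>{k\<in>K. k \<le> n}. \<Sum>j\<le>n-k. g k j)"
    by (rule sum.Sigma[symmetric]) auto
  finally show ?thesis .
qed

lemma sum_lt_one:
  fixes p :: "nat \<Rightarrow> real"
  assumes "\<forall>j. 0 \<le> p j" "p sums 1" "finite A"
  shows "sum p A \<le> 1" and "j \<notin> A \<Longrightarrow> 0 < p j \<Longrightarrow> sum p A < 1"
proof -
  have s: "summable p" "suminf p = 1" using assms(2) sums_summable sums_unique by metis+
  show "sum p A \<le> 1" using sum_le_suminf[OF s(1) assms(3)] assms(1) s(2) by auto
  assume "j \<notin> A" "0 < p j"
  have "sum p (insert j A) \<le> 1" using sum_le_suminf[OF s(1), of "insert j A"] assms(1,3) s(2) by auto
  then show "sum p A < 1" using \<open>j \<notin> A\<close> \<open>0 < p j\<close> assms(3) by simp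
qed

lemma ln_ineq:
  fixes a b c :: real
  assumes "0 \<le> a" "0 < b" "0 < c"
  shows "b * ln (b / c) - a * ln (a / c) \<le> (b - a) * (ln (b / c) + 1)"
proof (cases "a = 0")
  case True then show ?thesis using assms by simp
next
  case False
  then have a: "0 < a" using assms by simp
  have "ln (b / a) \<le> b / a - 1" using ln_le_minus_one[of "b/a"] a assms by simp
  then have "a * ln (b / a) \<le> b - a" using a by (simp add: field_simps)
  moreover have "ln (a / c) = ln (b / c) - ln (b / a)" using a assms by (simp add: ln_div)
  ultimately have "a * ln (b / c) = a * ln (a / c) + a * ln (b / a)" "a * ln (b / a) \<le> b - a"
    by (simp_all add: distrib_left[symmetric])
  then show ?thesis by (simp add: algebra_simps)
qed

definition rowp0 :: "(nat \<Rightarrow> real) \<Rightarrow> nat \<Rightarrow> nat \<Rightarrow> nat \<Rightarrow> nat \<Rightarrow> nat \<Rightarrow> real" where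
  "rowp0 \<alpha> k u v q j = (if q = k then ((if j = u then 1 else 0) - (if j = v then 1 else 0)) / \<alpha> k else 0)"

locale A9 =
  fixes I :: nat and \<beta> :: real and \<alpha> \<omega> :: "nat \<Rightarrow> real" and x :: "nat \<Rightarrow> nat \<Rightarrow> real"
  assumes beta_pos: "0 < \<beta>"
    and anon: "\<forall>j\<le>Suc I. 0 \<le> \<alpha> j" and asum: "(\<Sum>j\<le>Suc I. \<alpha> j) = 1"
    and alpha0: "0 < \<alpha> 0"
    and onon: "\<forall>j\<le>I. 0 \<le> \<omega> j" and osum: "(\<Sum>j\<le>I. \<omega> j) = 1"
    and irr: "\<forall>i<I. (\<Sum>j\<le>i. \<omega> j) < (\<Sum>j\<le>i. \<alpha> j)"
    and xfeas: "pi_feasible I \<alpha> \<omega> \<beta> x"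
    and xmin: "\<forall>\<pi>. pi_feasible I \<alpha> \<omega> \<beta> \<pi> \<longrightarrow> objective I \<alpha> \<beta> x \<le> objective I \<alpha> \<beta> \<pi>"
begin

abbreviation "K \<equiv> Kset I \<alpha>"
abbreviation "feas \<equiv> pi_feasible I \<alpha> \<omega> \<beta>"
abbreviation "c j \<equiv> poisson j \<beta>"

lemma c_pos: "0 < c j"
  using beta_pos by (simp add: poisson_def)

lemma finK: "finite K" and K_sub: "K \<subseteq> {..Suc I}" and K0: "0 \<in> K"
  and Kpos: "k \<in> K \<Longrightarrow> 0 < \<alpha> k"
  using alpha0 by (auto simp: Kset_def)

lemma sumK: "(\<Sum>k\<in>K. \<alpha> k) = 1"
proof -
  have "(\<Sum>k\<in>K. \<alpha> k) = (\<Sum>j\<le>Suc I. \<alpha> j)"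
    by (rule sum.mono_neutral_left) (use anon in \<open>auto simp: Kset_def\<close>)
  then show ?thesis using asum by simp
qed

lemma feasD:
  assumes "feas \<pi>"
  shows "\<And>k j. k \<in> K \<Longrightarrow> 0 \<le> \<pi> k j" "\<And>k. k \<in> K \<Longrightarrow> \<pi> k sums 1"
    "\<And>k. k \<in> K \<Longrightarrow> summable (\<lambda>j. real j * \<pi> k j)"
    "(\<Sum>k\<in>K. \<alpha> k * (\<Sum>j. real j * \<pi> k j)) = \<beta>"
    "\<And>i. i \<le> I \<Longrightarrow> \<omega> i = (\<Sum>k\<in>{k\<in>K. k \<le> i}. \<alpha> k * \<pi> k (i - k))"
  using assms by (auto simp: pi_feasible_def prob_dist_def)

lemma feas_supp:
  assumes f: "feas \<pi>" and k: "k \<in> K" and kj: "I < k + j"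
  shows "\<pi> k j = 0"
proof -
  define S where "S k = (\<Sum>j\<le>I-k. \<pi> k j)" for k
  have "1 = (\<Sum>i\<le>I. \<Sum>k\<in>{k\<in>K. k\<le>i}. \<alpha> k * \<pi> k (i-k))"
    using osum feasD(5)[OF f] by simp
  also have "\<dots> = (\<Sum>k\<in>{k\<in>K. k\<le>I}. \<alpha> k * S k)"
    by (subst sum_swap_tri) (simp add: S_def sum_distrib_left)
  finally have e1: "(\<Sum>k\<in>{k\<in>K. k\<le>I}. \<alpha> k * S k) = 1" by simp
  have Sle: "S k \<le> 1" if "k \<in> K" for k
    unfolding S_def by (rule sum_lt_one(1)) (use feasD[OF f] that in auto)
  have "(\<Sum>k\<in>K. \<alpha> k) = (\<Sum>k\<in>{k\<in>K. k\<le>I}. \<alpha> k) + (\<Sum>k\<in>{k\<in>K. \<not> k\<le>I}. \<alpha> k)"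
  proof -
    have "K = {k\<in>K. k\<le>I} \<union> {k\<in>K. \<not> k\<le>I}" by auto
    then show ?thesis using sum.union_disjoint[of "{k\<in>K. k\<le>I}" "{k\<in>K. \<not> k\<le>I}" \<alpha>] finK
      by (metis (no_types, lifting) disjoint_iff finite_Un mem_Collect_eq)
  qed
  hence "(\<Sum>k\<in>{k\<in>K. k\<le>I}. \<alpha> k * (1 - S k)) + (\<Sum>k\<in>{k\<in>K. \<not> k\<le>I}. \<alpha> k) = 0"
    using e1 sumK by (simp add: algebra_simps sum_subtractf)
  moreover have n1: "\<forall>k\<in>{k\<in>K. k\<le>I}. 0 \<le> \<alpha> k * (1 - S k)" using Sle Kpos by (simp add: less_imp_le)
  moreover have n2: "\<forall>k\<in>{k\<in>K. \<not> k\<le>I}. 0 \<le> \<alpha> k" using Kpos by (simp add: less_imp_le)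
  ultimately have "(\<Sum>k\<in>{k\<in>K. k\<le>I}. \<alpha> k * (1 - S k)) = 0 \<and> (\<Sum>k\<in>{k\<in>K. \<not> k\<le>I}. \<alpha> k) = 0"
    by (subst add_nonneg_eq_0_iff[symmetric]) (auto intro!: sum_nonneg)
  then have z1: "\<forall>k\<in>{k\<in>K. k\<le>I}. \<alpha> k * (1 - S k) = 0" and z2: "\<forall>k\<in>{k\<in>K. \<not> k\<le>I}. \<alpha> k = 0"
    using sum_nonneg_eq_0_iff[of "{k\<in>K. k\<le>I}" "\<lambda>k. \<alpha> k * (1 - S k)"]
      sum_nonneg_eq_0_iff[of "{k\<in>K. \<not> k\<le>I}" \<alpha>] finK n1 n2 by auto
  show ?thesis
  proof (rule ccontr)
    assume ne: "\<pi> k j \<noteq> 0"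
    have "0 \<le> \<pi> k j" using feasD(1)[OF f k] .
    then have pos: "0 < \<pi> k j" using ne by simp
    show False
    proof (cases "k \<le> I")
      case True
      have "S k < 1" unfolding S_def
        by (rule sum_lt_one(2)[of _ _ j]) (use feasD[OF f] k kj pos True in auto)
      then show False using z1 k True Kpos[OF k] by auto
    next
      case False then show False using z2 k Kpos[OF k] by auto
    qed
  qed
qed

lemma K_le_I: "k \<in> K \<Longrightarrow> k \<le> I"
proof (rule ccontr)
  assume k: "k \<in> K" and "\<not> k \<le> I"
  then have "x k = (\<lambda>j. 0)" using feas_supp[OF xfeas k] by auto
  then have "(\<lambda>j. 0::real) sums 1" using feasD(2)[OF xfeas k] by simp
  then show False using sums_zero sums_unique2 by (metis zero_neq_one)
qed

lemma feas_sum: assumes "feas \<pi>" "k \<in> K" shows "(\<Sum>j\<le>I. \<pi> k j) = 1"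
proof -
  have "\<pi> k sums (\<Sum>j\<le>I. \<pi> k j)"
    by (rule sums_finite) (use feas_supp[OF assms] in auto)
  then show ?thesis using feasD(2)[OF assms] sums_unique2 by blast
qed

definition Phi :: "(nat \<Rightarrow> nat \<Rightarrow> real) \<Rightarrow> real" where
  "Phi \<pi> = (\<Sum>(k,j)\<in>K \<times> {..I}. \<alpha> k * (\<pi> k j * ln (\<pi> k j / c j)))"

lemma obj_eq:
  assumes f: "feas \<pi>"
  shows "objective I \<alpha> \<beta> \<pi> = ereal (Phi \<pi>)"
proof -
  have re: "rel_entropy (\<pi> k) (\<lambda>j. c j) = ereal (\<Sum>j\<le>I. \<pi> k j * ln (\<pi> k j / c j))" if k: "k \<in> K" for k
  proof -
    have sm: "(\<lambda>j. \<pi> k j * ln (\<pi> k j / c j)) sums (\<Sum>j\<le>I. \<pi> k j * ln (\<pi> k j / c j))"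
      by (rule sums_finite) (use feas_supp[OF f k] in auto)
    show ?thesis unfolding rel_entropy_def using sums_summable[OF sm] sums_unique[OF sm] by simp
  qed
  have "objective I \<alpha> \<beta> \<pi> = (\<Sum>k\<in>K. ereal (\<alpha> k * (\<Sum>j\<le>I. \<pi> k j * ln (\<pi> k j / c j))))"
    unfolding objective_def by (rule sum.cong) (auto simp: re)
  also have "\<dots> = ereal (\<Sum>k\<in>K. \<alpha> k * (\<Sum>j\<le>I. \<pi> k j * ln (\<pi> k j / c j)))"
    by (simp add: sum_ereal)
  also have "(\<Sum>k\<in>K. \<alpha> k * (\<Sum>j\<le>I. \<pi> k j * ln (\<pi> k j / c j))) = Phi \<pi>"
    unfolding Phi_def by (simp add: sum_distrib_left sum.cartesian_product)
  finally show ?thesis .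
qed

lemma pert_feasible:
  assumes f: "feas \<pi>"
    and nn: "\<forall>q\<in>K. \<forall>j. 0 \<le> \<pi> q j + \<Delta> q j"
    and fin: "\<forall>q\<in>K. \<forall>j>I. \<Delta> q j = 0"
    and rs: "\<forall>q\<in>K. (\<Sum>j\<le>I. \<Delta> q j) = 0"
    and ms: "(\<Sum>q\<in>K. \<alpha> q * (\<Sum>j\<le>I. real j * \<Delta> q j)) = 0"
    and cs: "\<forall>i\<le>I. (\<Sum>q\<in>{q\<in>K. q\<le>i}. \<alpha> q * \<Delta> q (i-q)) = 0"
  shows "feas (\<lambda>q j. \<pi> q j + \<Delta> q j)"
proof -
  have ds: "\<Delta> q sums 0" if "q \<in> K" for q
    using sums_finite[of "{..I}" "\<Delta> q"] fin rs that by auto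
  have dm: "(\<lambda>j. real j * \<Delta> q j) sums (\<Sum>j\<le>I. real j * \<Delta> q j)" if "q \<in> K" for q
    by (rule sums_finite) (use fin that in auto)
  have A: "prob_dist (\<lambda>j. \<pi> q j + \<Delta> q j)" if q: "q \<in> K" for q
    unfolding prob_dist_def using nn q sums_add[OF feasD(2)[OF f q] ds[OF q]] by auto
  have B: "(\<lambda>j. real j * (\<pi> q j + \<Delta> q j)) sums ((\<Sum>j. real j * \<pi> q j) + (\<Sum>j\<le>I. real j * \<Delta> q j))"
    if q: "q \<in> K" for q
    using sums_add[OF summable_sums[OF feasD(3)[OF f q]] dm[OF q]] by (simp add: distrib_left)
  have C: "(\<Sum>q\<in>K. \<alpha> q * (\<Sum>j. real j * (\<pi> q j + \<Delta> q j))) = \<beta>"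
  proof -
    have "(\<Sum>q\<in>K. \<alpha> q * (\<Sum>j. real j * (\<pi> q j + \<Delta> q j))) =
          (\<Sum>q\<in>K. \<alpha> q * (\<Sum>j. real j * \<pi> q j) + \<alpha> q * (\<Sum>j\<le>I. real j * \<Delta> q j))"
    proof (rule sum.cong)
      fix q assume q: "q \<in> K"
      have "(\<Sum>j. real j * (\<pi> q j + \<Delta> q j)) = (\<Sum>j. real j * \<pi> q j) + (\<Sum>j\<le>I. real j * \<Delta> q j)"
        using B[OF q] sums_unique by metis
      then show "\<alpha> q * (\<Sum>j. real j * (\<pi> q j + \<Delta> q j)) = \<alpha> q * (\<Sum>j. real j * \<pi> q j) + \<alpha> q * (\<Sum>j\<le>I. real j * \<Delta> q j)"
        by (simp add: distrib_left)
    qed simp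
    then show ?thesis using ms feasD(4)[OF f] by (simp add: sum.distrib)
  qed
  show ?thesis unfolding pi_feasible_def
  proof (intro conjI ballI allI impI)
    fix q assume q: "q \<in> K"
    show "prob_dist (\<lambda>j. \<pi> q j + \<Delta> q j)" using A[OF q] .
    show "summable (\<lambda>j. real j * (\<pi> q j + \<Delta> q j))" using B[OF q] by (rule sums_summable)
  next
    show "(\<Sum>q\<in>K. \<alpha> q * (\<Sum>j. real j * (\<pi> q j + \<Delta> q j))) = \<beta>" using C .
  next
    fix i assume i: "i \<le> I"
    show "\<omega> i = (\<Sum>q\<in>{q\<in>K. q\<le>i}. \<alpha> q * (\<pi> q (i-q) + \<Delta> q (i-q)))"
      using feasD(5)[OF f i] cs i by (simp add: sum.distrib distrib_left)
  qed
qed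


definition rowp :: "nat \<Rightarrow> nat \<Rightarrow> nat \<Rightarrow> nat \<Rightarrow> nat \<Rightarrow> real" where
  "rowp k u v q j = rowp0 \<alpha> k u v q j" 

lemma rs_rowp: assumes "u \<le> I" "v \<le> I" shows "(\<Sum>j\<le>I. rowp k u v q j) = 0"
proof (cases "q = k")
  case True
  have "(\<Sum>j\<le>I. rowp k u v q j) = (\<Sum>j\<le>I. ((if j = u then 1 else 0) - (if j = v then 1 else 0))) / \<alpha> k"
    using True by (simp add: rowp_def rowp0_def sum_divide_distrib)
  also have "\<dots> = 0" using assms by (simp add: sum_subtractf)
  finally show ?thesis .
qed (simp add: rowp_def rowp0_def)

lemma ms_rowp: assumes "k \<in> K" "u \<le> I" "v \<le> I"
  shows "(\<Sum>q\<in>K. \<alpha> q * (\<Sum>j\<le>I. real j * rowp k u v q j)) = real u - real v"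
proof -
  have "(\<Sum>j\<le>I. real j * rowp k u v q j) = (if q = k then (real u - real v) / \<alpha> k else 0)" for q
    using assms by (simp add: rowp_def rowp0_def sum_subtractf right_diff_distrib sum_divide_distrib[symmetric]
         if_distrib[of "\<lambda>t. real _ * t"] cong: if_cong)
  then have "(\<Sum>q\<in>K. \<alpha> q * (\<Sum>j\<le>I. real j * rowp k u v q j)) = (\<Sum>q\<in>K. if q = k then \<alpha> k * ((real u - real v) / \<alpha> k) else 0)"
    by (intro sum.cong) auto
  then show ?thesis using assms finK Kpos[OF assms(1)] by simp
qed

lemma cs_rowp: assumes "k \<in> K"
  shows "(\<Sum>q\<in>{q\<in>K. q\<le>i}. \<alpha> q * rowp k u v q (i-q)) =
     (if k \<le> i \<and> i - k = u then 1 else 0) - (if k \<le> i \<and> i - k = v then 1 else 0)"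
proof -
  have "\<alpha> q * rowp k u v q (i-q) = (if q = k then (if i - k = u then 1 else 0) - (if i - k = v then 1 else 0) else 0)" for q
    using Kpos[OF assms] by (auto simp: rowp_def rowp0_def)
  then have "(\<Sum>q\<in>{q\<in>K. q\<le>i}. \<alpha> q * rowp k u v q (i-q)) =
     (\<Sum>q\<in>{q\<in>K. q\<le>i}. (if q = k then (if i - k = u then 1 else 0) - (if i - k = v then 1 else 0) else 0))"
    by simp
  also have "\<dots> = (if k \<le> i \<and> i - k = u then 1 else 0) - (if k \<le> i \<and> i - k = v then 1 else 0)"
    using finK assms by (simp add: sum.delta)
  finally show ?thesis .
qed

definition sw :: "nat \<Rightarrow> nat \<Rightarrow> nat \<Rightarrow> nat \<Rightarrow> nat \<Rightarrow> nat \<Rightarrow> real" where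
  "sw k r a b q j = rowp k (b-k) (a-k) q j + rowp r (a-r) (b-r) q j"

lemma sw_feas:
  assumes f: "feas \<pi>" and k: "k \<in> K" and r: "r \<in> K" and kr: "k \<noteq> r" and ab: "a \<noteq> b"
    and le: "k \<le> a" "k \<le> b" "r \<le> a" "r \<le> b" "a \<le> I" "b \<le> I"
    and e: "0 < \<epsilon>" "\<epsilon> \<le> \<alpha> k * \<pi> k (a-k)" "\<epsilon> \<le> \<alpha> r * \<pi> r (b-r)"
  shows "feas (\<lambda>q j. \<pi> q j + \<epsilon> * sw k r a b q j)"
proof (rule pert_feasible[OF f])
  show "\<forall>q\<in>K. \<forall>j. 0 \<le> \<pi> q j + \<epsilon> * sw k r a b q j"
  proof (intro ballI allI)
    fix q j assume q: "q \<in> K"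
    have p0: "0 \<le> \<pi> q j" using feasD(1)[OF f q] .
    have ak: "0 < \<alpha> k" "0 < \<alpha> r" using Kpos k r by auto
    consider "q = k" "j = a - k" | "q = r" "j = b - r" | "\<not> (q = k \<and> j = a - k)" "\<not> (q = r \<and> j = b - r)" by blast
    then show "0 \<le> \<pi> q j + \<epsilon> * sw k r a b q j"
    proof cases
      case 1
      then have "sw k r a b q j = - 1 / \<alpha> k + (if k = r then 1 else 0) * 0" using kr ab le
        by (auto simp: sw_def rowp_def rowp0_def)
      have "\<epsilon> / \<alpha> k \<le> \<pi> k (a-k)" using e ak by (simp add: divide_le_eq mult.commute)
      then show ?thesis using 1 \<open>sw k r a b q j = _\<close> by simp
    next
      case 2
      then have "sw k r a b q j = - 1 / \<alpha> r" using kr ab le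
        by (auto simp: sw_def rowp_def rowp0_def)
      have "\<epsilon> / \<alpha> r \<le> \<pi> r (b-r)" using e ak by (simp add: divide_le_eq mult.commute)
      then show ?thesis using 2 \<open>sw k r a b q j = _\<close> by simp
    next
      case 3
      then have "0 \<le> sw k r a b q j" using ak by (auto simp: sw_def rowp_def rowp0_def)
      then show ?thesis using p0 e by simp
    qed
  qed
  show "\<forall>q\<in>K. \<forall>j>I. \<epsilon> * sw k r a b q j = 0"
    using le by (auto simp: sw_def rowp_def rowp0_def)
  show "\<forall>q\<in>K. (\<Sum>j\<le>I. \<epsilon> * sw k r a b q j) = 0"
    using le by (simp add: sw_def sum.distrib sum_distrib_left[symmetric] rs_rowp)
  have "(\<Sum>q\<in>K. \<alpha> q * (\<Sum>j\<le>I. real j * (\<epsilon> * sw k r a b q j))) =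
     \<epsilon> * ((\<Sum>q\<in>K. \<alpha> q * (\<Sum>j\<le>I. real j * rowp k (b-k) (a-k) q j)) +
          (\<Sum>q\<in>K. \<alpha> q * (\<Sum>j\<le>I. real j * rowp r (a-r) (b-r) q j)))"
    by (simp add: sw_def sum.distrib distrib_left sum_distrib_left mult.assoc mult.left_commute)
  also have "\<dots> = 0" using le k r by (simp add: ms_rowp of_nat_diff)
  finally show "(\<Sum>q\<in>K. \<alpha> q * (\<Sum>j\<le>I. real j * (\<epsilon> * sw k r a b q j))) = 0" .
  show "\<forall>i\<le>I. (\<Sum>q\<in>{q\<in>K. q\<le>i}. \<alpha> q * (\<epsilon> * sw k r a b q (i-q))) = 0"
  proof (intro allI impI)
    fix i assume "i \<le> I"
    have "(\<Sum>q\<in>{q\<in>K. q\<le>i}. \<alpha> q * (\<epsilon> * sw k r a b q (i-q))) =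
      \<epsilon> * ((\<Sum>q\<in>{q\<in>K. q\<le>i}. \<alpha> q * rowp k (b-k) (a-k) q (i-q)) +
          (\<Sum>q\<in>{q\<in>K. q\<le>i}. \<alpha> q * rowp r (a-r) (b-r) q (i-q)))"
      by (simp add: sw_def sum.distrib distrib_left sum_distrib_left mult.assoc mult.left_commute)
    also have "\<dots> = 0"
    proof -
      have e1: "(k \<le> i \<and> i - k = b - k) = (i = b)" "(k \<le> i \<and> i - k = a - k) = (i = a)"
        "(r \<le> i \<and> i - r = b - r) = (i = b)" "(r \<le> i \<and> i - r = a - r) = (i = a)"
        using le by auto
      show ?thesis unfolding cs_rowp[OF k] cs_rowp[OF r] e1 by simp
    qed
    finally show "(\<Sum>q\<in>{q\<in>K. q\<le>i}. \<alpha> q * (\<epsilon> * sw k r a b q (i-q))) = 0" .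
  qed
qed

lemma sw_vals:
  assumes kr: "k \<noteq> r" and ab: "a \<noteq> b" and le: "k \<le> a" "k \<le> b" "r \<le> a" "r \<le> b"
  shows "sw k r a b k (b-k) = 1 / \<alpha> k" "sw k r a b k (a-k) = - 1 / \<alpha> k"
    "sw k r a b r (a-r) = 1 / \<alpha> r" "sw k r a b r (b-r) = - 1 / \<alpha> r"
    "\<not> (q = k \<and> (j = a-k \<or> j = b-k)) \<Longrightarrow> \<not> (q = r \<and> (j = a-r \<or> j = b-r)) \<Longrightarrow> sw k r a b q j = 0"
  using assms by (auto simp: sw_def rowp_def rowp0_def)


definition Tm :: "(nat \<Rightarrow> nat \<Rightarrow> real) \<Rightarrow> nat \<Rightarrow> nat \<Rightarrow> real \<Rightarrow> real" where
  "Tm \<Delta> q j \<epsilon> = \<alpha> q * (\<Delta> q j * (ln ((x q j + \<epsilon> * \<Delta> q j) / c j) + 1))"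

definition Bf :: "(nat \<Rightarrow> nat \<Rightarrow> real) \<Rightarrow> real \<Rightarrow> real" where
  "Bf \<Delta> \<epsilon> = (\<Sum>(q,j)\<in>K \<times> {..I}. Tm \<Delta> q j \<epsilon>)"

lemma x_nonneg: "q \<in> K \<Longrightarrow> 0 \<le> x q j"
  using feasD(1)[OF xfeas] .

lemma phi_diff:
  assumes pos: "\<forall>(q,j)\<in>K \<times> {..I}. \<Delta> q j \<noteq> 0 \<longrightarrow> 0 < x q j + \<epsilon> * \<Delta> q j"
  shows "Phi (\<lambda>q j. x q j + \<epsilon> * \<Delta> q j) - Phi x \<le> \<epsilon> * Bf \<Delta> \<epsilon>"
proof -
  have "Phi (\<lambda>q j. x q j + \<epsilon> * \<Delta> q j) - Phi x =
    (\<Sum>(q,j)\<in>K \<times> {..I}. \<alpha> q * ((x q j + \<epsilon> * \<Delta> q j) * ln ((x q j + \<epsilon> * \<Delta> q j) / c j) - x q j * ln (x q j / c j)))"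
    unfolding Phi_def by (simp add: sum_subtractf[symmetric] case_prod_beta right_diff_distrib)
  also have "\<dots> \<le> (\<Sum>(q,j)\<in>K \<times> {..I}. \<epsilon> * Tm \<Delta> q j \<epsilon>)"
  proof (rule sum_mono)
    fix s assume s: "s \<in> K \<times> {..I}"
    obtain q j where sq: "s = (q,j)" by force
    have q: "q \<in> K" using s sq by auto
    show "(case s of (q,j) \<Rightarrow> \<alpha> q * ((x q j + \<epsilon> * \<Delta> q j) * ln ((x q j + \<epsilon> * \<Delta> q j) / c j) - x q j * ln (x q j / c j)))
       \<le> (case s of (q,j) \<Rightarrow> \<epsilon> * Tm \<Delta> q j \<epsilon>)"
    proof (cases "\<Delta> q j = 0")
      case True then show ?thesis using sq by (simp add: Tm_def)
    next
      case False
      then have b: "0 < x q j + \<epsilon> * \<Delta> q j" using pos s sq by auto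
      have "(x q j + \<epsilon> * \<Delta> q j) * ln ((x q j + \<epsilon> * \<Delta> q j) / c j) - x q j * ln (x q j / c j)
          \<le> ((x q j + \<epsilon> * \<Delta> q j) - x q j) * (ln ((x q j + \<epsilon> * \<Delta> q j) / c j) + 1)"
        by (rule ln_ineq[OF x_nonneg[OF q] b c_pos])
      then have "\<alpha> q * ((x q j + \<epsilon> * \<Delta> q j) * ln ((x q j + \<epsilon> * \<Delta> q j) / c j) - x q j * ln (x q j / c j))
          \<le> \<alpha> q * ((\<epsilon> * \<Delta> q j) * (ln ((x q j + \<epsilon> * \<Delta> q j) / c j) + 1))"
        using Kpos[OF q] by (intro mult_left_mono) auto
      then show ?thesis using sq by (simp add: Tm_def mult_ac)
    qed
  qed
  also have "\<dots> = \<epsilon> * Bf \<Delta> \<epsilon>"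
    unfolding Bf_def by (simp add: sum_distrib_left case_prod_beta)
  finally show ?thesis .
qed

lemma descent_main:
  assumes evf: "eventually (\<lambda>\<epsilon>. feas (\<lambda>q j. x q j + \<epsilon> * \<Delta> q j)) (at_right 0)"
    and evB: "eventually (\<lambda>\<epsilon>. Bf \<Delta> \<epsilon> < 0) (at_right 0)"
    and nz: "\<forall>q\<in>K. \<forall>j\<le>I. x q j = 0 \<longrightarrow> 0 \<le> \<Delta> q j"
  shows False
proof -
  have epos: "eventually (\<lambda>\<epsilon>. 0 < \<epsilon>) (at_right (0::real))"
    unfolding eventually_at_right_field by (intro exI[of _ 1]) auto
  have "eventually (\<lambda>\<epsilon>. \<Delta> q j \<noteq> 0 \<longrightarrow> 0 < x q j + \<epsilon> * \<Delta> q j) (at_right 0)"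
    if s: "(q,j) \<in> K \<times> {..I}" for q j
  proof (cases "x q j = 0")
    case True
    then have "0 \<le> \<Delta> q j" using nz s by auto
    from epos show ?thesis
    proof eventually_elim
      case (elim e)
      show ?case using elim True \<open>0 \<le> \<Delta> q j\<close> by (auto simp: zero_less_mult_iff)
    qed
  next
    case False
    then have "0 < x q j" using x_nonneg[of q j] s by auto
    moreover have "((\<lambda>\<epsilon>. x q j + \<epsilon> * \<Delta> q j) \<longlongrightarrow> x q j + 0 * \<Delta> q j) (at_right 0)"
      by (intro tendsto_intros)
    then have tt: "((\<lambda>\<epsilon>. x q j + \<epsilon> * \<Delta> q j) \<longlongrightarrow> x q j) (at_right 0)" by simp
    ultimately have "eventually (\<lambda>\<epsilon>. 0 < x q j + \<epsilon> * \<Delta> q j) (at_right 0)"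
      using order_tendstoD(1)[OF tt] by blast
    then show ?thesis by eventually_elim auto
  qed
  then have "eventually (\<lambda>\<epsilon>. \<forall>s\<in>K \<times> {..I}. (case s of (q,j) \<Rightarrow> \<Delta> q j \<noteq> 0 \<longrightarrow> 0 < x q j + \<epsilon> * \<Delta> q j)) (at_right 0)"
    using finK by (intro eventually_ball_finite) auto
  then have evall: "eventually (\<lambda>\<epsilon>. 0 < \<epsilon> \<and> feas (\<lambda>q j. x q j + \<epsilon> * \<Delta> q j) \<and> Bf \<Delta> \<epsilon> < 0 \<and>
      (\<forall>(q,j)\<in>K \<times> {..I}. \<Delta> q j \<noteq> 0 \<longrightarrow> 0 < x q j + \<epsilon> * \<Delta> q j)) (at_right 0)"
    using epos evf evB by eventually_elim auto
  then obtain \<epsilon> where e: "0 < \<epsilon>" "feas (\<lambda>q j. x q j + \<epsilon> * \<Delta> q j)" "Bf \<Delta> \<epsilon> < 0"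
      "\<forall>(q,j)\<in>K \<times> {..I}. \<Delta> q j \<noteq> 0 \<longrightarrow> 0 < x q j + \<epsilon> * \<Delta> q j"
    using eventually_happens[OF evall] trivial_limit_at_right_real by auto
  have "Phi (\<lambda>q j. x q j + \<epsilon> * \<Delta> q j) - Phi x \<le> \<epsilon> * Bf \<Delta> \<epsilon>" by (rule phi_diff[OF e(4)])
  moreover have "\<epsilon> * Bf \<Delta> \<epsilon> < 0" using e by (simp add: mult_pos_neg)
  moreover have "objective I \<alpha> \<beta> x \<le> objective I \<alpha> \<beta> (\<lambda>q j. x q j + \<epsilon> * \<Delta> q j)"
    using xmin e(2) by blast
  then have "Phi x \<le> Phi (\<lambda>q j. x q j + \<epsilon> * \<Delta> q j)"
    using obj_eq[OF xfeas] obj_eq[OF e(2)] by simp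
  ultimately show False by linarith
qed

lemma Tm_tendsto:
  assumes "\<Delta> q j \<noteq> 0 \<longrightarrow> 0 < x q j"
  shows "(Tm \<Delta> q j \<longlongrightarrow> Tm \<Delta> q j 0) (at_right 0)"
proof (cases "\<Delta> q j = 0")
  case True
  then have "Tm \<Delta> q j = (\<lambda>_. 0)" by (simp add: Tm_def fun_eq_iff)
  then show ?thesis by simp
next
  case False
  then have "0 < x q j" using assms by auto
  then have "((\<lambda>\<epsilon>. \<alpha> q * (\<Delta> q j * (ln ((x q j + \<epsilon> * \<Delta> q j) / c j) + 1))) \<longlongrightarrow>
     \<alpha> q * (\<Delta> q j * (ln ((x q j + 0 * \<Delta> q j) / c j) + 1))) (at_right 0)"
    using c_pos[of j] by (intro tendsto_intros) auto
  then show ?thesis unfolding Tm_def by simp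
qed

lemma caseB:
  assumes "\<forall>q\<in>K. \<forall>j\<le>I. \<Delta> q j \<noteq> 0 \<longrightarrow> 0 < x q j" and "Bf \<Delta> 0 < 0"
  shows "eventually (\<lambda>\<epsilon>. Bf \<Delta> \<epsilon> < 0) (at_right 0)"
proof -
  have "(Bf \<Delta> \<longlongrightarrow> Bf \<Delta> 0) (at_right 0)"
    unfolding Bf_def case_prod_beta
    by (intro tendsto_sum Tm_tendsto) (use assms(1) in auto)
  then show ?thesis using assms(2) order_tendstoD(2) by blast
qed

lemma lnbound:
  fixes a d cc M :: real
  assumes a: "0 < a" and d: "0 < d" and cc: "0 < cc"
  shows "eventually (\<lambda>\<epsilon>. a * (ln (\<epsilon> * d / cc) + 1) < M) (at_right 0)"
proof -
  define b where "b = cc * exp (M / a - 1) / d"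
  have b: "0 < b" unfolding b_def using cc d by (intro divide_pos_pos mult_pos_pos) auto
  have "a * (ln (e * d / cc) + 1) < M" if e: "0 < e" "e < b" for e
  proof -
    have "e * d / cc < exp (M / a - 1)" using e cc d by (simp add: b_def field_simps)
    moreover have "0 < e * d / cc" using e cc d by simp
    ultimately have "ln (e * d / cc) < ln (exp (M / a - 1))"
      by (subst ln_less_cancel_iff) auto
    then have "ln (e * d / cc) < M / a - 1" by simp
    then have "a * (ln (e * d / cc) + 1) < a * (M / a)" using a by (intro mult_strict_left_mono) auto
    then show "a * (ln (e * d / cc) + 1) < M" using a by simp
  qed
  then show ?thesis using b unfolding eventually_at_right_field by blast
qed

lemma caseA:
  assumes s0: "q0 \<in> K" "j0 \<le> I" "x q0 j0 = 0" "0 < \<Delta> q0 j0"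
    and nz: "\<forall>q\<in>K. \<forall>j\<le>I. x q j = 0 \<longrightarrow> 0 \<le> \<Delta> q j"
  shows "eventually (\<lambda>\<epsilon>. Bf \<Delta> \<epsilon> < 0) (at_right 0)"
proof -
  define A where "A = K \<times> {..I} - {(q0,j0)}"
  have finA: "finite A" using finK by (simp add: A_def)
  have "\<exists>U. eventually (\<lambda>\<epsilon>. Tm \<Delta> q j \<epsilon> \<le> U) (at_right 0)" if s: "(q,j) \<in> A" for q j
  proof (cases "\<Delta> q j \<noteq> 0 \<and> x q j = 0")
    case True
    then have "0 < \<Delta> q j" using nz s by (force simp: A_def)
    then have "eventually (\<lambda>\<epsilon>. \<alpha> q * \<Delta> q j * (ln (\<epsilon> * \<Delta> q j / c j) + 1) < 0) (at_right 0)"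
      using s Kpos c_pos by (intro lnbound) (auto simp: A_def)
    then have "eventually (\<lambda>\<epsilon>. Tm \<Delta> q j \<epsilon> \<le> 0) (at_right 0)"
      by eventually_elim (use True in \<open>simp add: Tm_def mult.assoc\<close>)
    then show ?thesis by blast
  next
    case False
    then have "(Tm \<Delta> q j \<longlongrightarrow> Tm \<Delta> q j 0) (at_right 0)"
      using x_nonneg[of q j] s by (intro Tm_tendsto) (auto simp: A_def)
    then have "eventually (\<lambda>\<epsilon>. Tm \<Delta> q j \<epsilon> < Tm \<Delta> q j 0 + 1) (at_right 0)"
      using order_tendstoD(2)[of "Tm \<Delta> q j"] by simp
    then have "eventually (\<lambda>\<epsilon>. Tm \<Delta> q j \<epsilon> \<le> Tm \<Delta> q j 0 + 1) (at_right 0)"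
      by eventually_elim simp
    then show ?thesis by blast
  qed
  then obtain U where U: "\<forall>s\<in>A. eventually (\<lambda>\<epsilon>. Tm \<Delta> (fst s) (snd s) \<epsilon> \<le> U s) (at_right 0)"
    using bchoice[of A "\<lambda>s U. eventually (\<lambda>\<epsilon>. Tm \<Delta> (fst s) (snd s) \<epsilon> \<le> U) (at_right 0)"] by force
  have ev1: "eventually (\<lambda>\<epsilon>. \<forall>s\<in>A. Tm \<Delta> (fst s) (snd s) \<epsilon> \<le> U s) (at_right 0)"
    using finA U by (intro eventually_ball_finite) auto
  have "eventually (\<lambda>\<epsilon>. \<alpha> q0 * \<Delta> q0 j0 * (ln (\<epsilon> * \<Delta> q0 j0 / c j0) + 1) < - sum U A) (at_right 0)"
    using s0 Kpos c_pos by (intro lnbound) auto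
  then have ev2: "eventually (\<lambda>\<epsilon>. Tm \<Delta> q0 j0 \<epsilon> < - sum U A) (at_right 0)"
    by eventually_elim (use s0 in \<open>simp add: Tm_def mult.assoc\<close>)
  show ?thesis
    using ev1 ev2
  proof eventually_elim
    case (elim \<epsilon>)
    have "Bf \<Delta> \<epsilon> = Tm \<Delta> q0 j0 \<epsilon> + (\<Sum>s\<in>A. Tm \<Delta> (fst s) (snd s) \<epsilon>)"
      unfolding Bf_def A_def case_prod_beta using finK s0
      by (subst sum.remove[of _ "(q0,j0)"]) auto
    also have "(\<Sum>s\<in>A. Tm \<Delta> (fst s) (snd s) \<epsilon>) \<le> sum U A"
      using elim(1) by (intro sum_mono) auto
    finally show ?case using elim(2) by linarith
  qed
qed


lemma sw_nz: "sw k r a b q j \<noteq> 0 \<Longrightarrow> (q = k \<and> (j = a-k \<or> j = b-k)) \<or> (q = r \<and> (j = a-r \<or> j = b-r))"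
  by (auto simp: sw_def rowp_def rowp0_def split: if_splits)

lemma sw_neg: "k \<in> K \<Longrightarrow> r \<in> K \<Longrightarrow> sw k r a b q j < 0 \<Longrightarrow> (q = k \<and> j = a-k) \<or> (q = r \<and> j = b-r)"
  using Kpos[of k] Kpos[of r] by (auto simp: sw_def rowp_def rowp0_def split: if_splits)

lemma swap_evf:
  assumes k: "k \<in> K" and r: "r \<in> K" and kr: "k \<noteq> r" and ab: "a \<noteq> b"
    and le: "k \<le> a" "k \<le> b" "r \<le> a" "r \<le> b" "a \<le> I" "b \<le> I"
    and p: "0 < x k (a-k)" "0 < x r (b-r)"
  shows "eventually (\<lambda>\<epsilon>. feas (\<lambda>q j. x q j + \<epsilon> * sw k r a b q j)) (at_right 0)"
proof -
  define m where "m = min (\<alpha> k * x k (a-k)) (\<alpha> r * x r (b-r))"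
  have m: "0 < m" unfolding m_def using p Kpos[OF k] Kpos[OF r] by simp
  have "feas (\<lambda>q j. x q j + e * sw k r a b q j)" if "0 < e" "e < m" for e
    by (rule sw_feas[OF xfeas k r kr ab le]) (use that in \<open>auto simp: m_def\<close>)
  then show ?thesis unfolding eventually_at_right_field using m by blast
qed

lemma swap_nz:
  assumes "k \<in> K" "r \<in> K" "0 < x k (a-k)" "0 < x r (b-r)"
  shows "\<forall>q\<in>K. \<forall>j\<le>I. x q j = 0 \<longrightarrow> 0 \<le> sw k r a b q j"
proof (intro ballI allI impI)
  fix q j assume q: "q \<in> K" and "j \<le> I" and z: "x q j = 0"
  show "0 \<le> sw k r a b q j"
  proof (rule ccontr)
    assume "\<not> 0 \<le> sw k r a b q j"
    then have "sw k r a b q j < 0" by simp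
    from sw_neg[OF assms(1,2) this] show False using assms(3,4) z by auto
  qed
qed

lemma irr_ex:
  assumes t: "t < I"
  shows "\<exists>r\<in>K. \<exists>j. r \<le> t \<and> t < r + j \<and> r + j \<le> I \<and> 0 < x r j"
proof (rule ccontr)
  assume no: "\<not> ?thesis"
  have one: "(\<Sum>j\<le>t-r. x r j) = 1" if r: "r \<in> K" "r \<le> t" for r
  proof -
    have "x r sums (\<Sum>j\<le>t-r. x r j)"
    proof (rule sums_finite)
      fix j assume "j \<notin> {..t-r}"
      then have "t < r + j" using r by auto
      show "x r j = 0"
      proof (cases "r + j \<le> I")
        case True
        then show ?thesis using no r \<open>t < r + j\<close> x_nonneg[of r j] by force
      next
        case False then show ?thesis using feas_supp[OF xfeas r(1)] by simp
      qed
    qed simp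
    then show ?thesis using feasD(2)[OF xfeas r(1)] sums_unique2 by blast
  qed
  have "(\<Sum>j\<le>t. \<omega> j) = (\<Sum>i\<le>t. \<Sum>k\<in>{k\<in>K. k\<le>i}. \<alpha> k * x k (i-k))"
    using feasD(5)[OF xfeas] t by simp
  also have "\<dots> = (\<Sum>k\<in>{k\<in>K. k\<le>t}. \<alpha> k * (\<Sum>j\<le>t-k. x k j))"
    by (subst sum_swap_tri) (simp add: sum_distrib_left)
  also have "\<dots> = (\<Sum>k\<in>{k\<in>K. k\<le>t}. \<alpha> k)"
    by (rule sum.cong) (auto simp: one)
  also have "\<dots> = (\<Sum>j\<le>t. \<alpha> j)"
  proof (rule sum.mono_neutral_left)
    show "\<forall>i\<in>{..t} - {k\<in>K. k\<le>t}. \<alpha> i = 0"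
    proof
      fix i assume "i \<in> {..t} - {k\<in>K. k\<le>t}"
      then have "i \<le> Suc I" "\<not> 0 < \<alpha> i" using t by (auto simp: Kset_def)
      then show "\<alpha> i = 0" using anon by force
    qed
  qed auto
  finally show False using irr t by auto
qed

lemma posA:
  assumes k: "k \<in> K"
  shows "0 < x k (I-k)"
proof (rule ccontr)
  assume "\<not> 0 < x k (I-k)"
  then have z: "x k (I-k) = 0" using x_nonneg[OF k, of "I-k"] by simp
  have kI: "k \<le> I" using K_le_I[OF k] .
  define J where "J = {j. j \<le> I - k \<and> 0 < x k j}"
  have finJ: "finite J" unfolding J_def by simp
  have "J \<noteq> {}"
  proof
    assume "J = {}"
    then have "x k j = 0" if "j \<le> I" for j
    proof (cases "j \<le> I - k")
      case True then show ?thesis using \<open>J = {}\<close> x_nonneg[OF k, of j] unfolding J_def by force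
    next
      case False then show ?thesis using feas_supp[OF xfeas k, of j] kI by simp
    qed
    then have "(\<Sum>j\<le>I. x k j) = 0" by simp
    then show False using feas_sum[OF xfeas k] by simp
  qed
  define jm where "jm = Max J"
  have jmJ: "jm \<in> J" unfolding jm_def using finJ \<open>J \<noteq> {}\<close> by simp
  have jmax: "j \<le> jm" if "j \<in> J" for j unfolding jm_def using finJ that by simp
  have jm: "jm \<le> I - k" "0 < x k jm" using jmJ unfolding J_def by auto
  have "jm \<noteq> I - k" using jm z by auto
  then have tI: "k + jm < I" using jm kI by linarith
  obtain r j' where r: "r \<in> K" "r \<le> k + jm" "k + jm < r + j'" "r + j' \<le> I" "0 < x r j'"
    using irr_ex[OF tI] by blast
  have rk: "r \<noteq> k"
  proof
    assume "r = k"
    then have "j' \<in> J" using r unfolding J_def by auto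
    then show False using jmax r \<open>r = k\<close> by force
  qed
  let ?a = "k + jm" and ?b = "r + j'"
  have zb: "x k (?b - k) = 0"
  proof (rule ccontr)
    assume "x k (?b - k) \<noteq> 0"
    then have "?b - k \<in> J" using x_nonneg[OF k, of "?b-k"] r unfolding J_def by auto
    then show False using jmax r by force
  qed
  have ev: "eventually (\<lambda>\<epsilon>. feas (\<lambda>q j. x q j + \<epsilon> * sw k r ?a ?b q j)) (at_right 0)"
    by (rule swap_evf) (use k r rk jm r in auto)
  have nz: "\<forall>q\<in>K. \<forall>j\<le>I. x q j = 0 \<longrightarrow> 0 \<le> sw k r ?a ?b q j"
    by (rule swap_nz) (use k r jm in auto)
  have "sw k r ?a ?b k (?b - k) = 1 / \<alpha> k"
    by (rule sw_vals(1)) (use rk r in auto)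
  then have "eventually (\<lambda>\<epsilon>. Bf (sw k r ?a ?b) \<epsilon> < 0) (at_right 0)"
    using Kpos[OF k] zb r k by (intro caseA[OF k _ zb _ nz]) auto
  then show False using descent_main[OF ev _ nz] by blast
qed

lemma posB:
  assumes k: "k \<in> K" and i: "k + j \<le> I" and w: "0 < \<omega> (k + j)"
  shows "0 < x k j"
proof (rule ccontr)
  assume "\<not> 0 < x k j"
  then have z: "x k j = 0" using x_nonneg[OF k, of j] by simp
  let ?i = "k + j"
  have "\<exists>r\<in>{q\<in>K. q \<le> ?i}. 0 < \<alpha> r * x r (?i - r)"
  proof (rule ccontr)
    assume "\<not> ?thesis"
    then have "(\<Sum>q\<in>{q\<in>K. q\<le>?i}. \<alpha> q * x q (?i - q)) \<le> 0"
      by (intro sum_nonpos) auto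
    then show False using feasD(5)[OF xfeas i] w by simp
  qed
  then obtain r where r1: "r \<in> K" "r \<le> ?i" "0 < \<alpha> r * x r (?i - r)" by blast
  then have r: "r \<in> K" "r \<le> ?i" "0 < x r (?i - r)"
    using Kpos[of r] by (auto simp: zero_less_mult_iff)
  have rk: "r \<noteq> k" using r z by auto
  have iI: "?i \<noteq> I" using posA[OF k] z by auto
  have kI: "k \<le> I" "r \<le> I" using K_le_I k r by auto
  have ev: "eventually (\<lambda>\<epsilon>. feas (\<lambda>q j. x q j + \<epsilon> * sw k r I ?i q j)) (at_right 0)"
    by (rule swap_evf) (use k r rk iI i kI posA[OF k] in auto)
  have nz: "\<forall>q\<in>K. \<forall>j\<le>I. x q j = 0 \<longrightarrow> 0 \<le> sw k r I ?i q j"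
    by (rule swap_nz) (use k r posA[OF k] in auto)
  have "sw k r I ?i k (?i - k) = 1 / \<alpha> k"
    by (rule sw_vals(1)) (use rk r iI kI i in auto)
  then have "eventually (\<lambda>\<epsilon>. Bf (sw k r I ?i) \<epsilon> < 0) (at_right 0)"
    using Kpos[OF k] z i by (intro caseA[OF k _ _ _ nz]) auto
  then show False using descent_main[OF ev _ nz] by blast
qed


lemma rowp_sum:
  assumes k: "k \<in> K" and uv: "u \<le> I" "v \<le> I"
  shows "(\<Sum>(q,j)\<in>K \<times> {..I}. \<alpha> q * (rowp k u v q j * f q j)) = f k u - f k v"
proof -
  have inner: "(\<Sum>j\<le>I. \<alpha> q * (rowp k u v q j * f q j)) = (if q = k then f k u - f k v else 0)" for q
  proof (cases "q = k")
    case True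
    have "(\<Sum>j\<le>I. \<alpha> q * (rowp k u v q j * f q j)) =
        (\<Sum>j\<le>I. (if j = u then f k j else 0) - (if j = v then f k j else 0))"
      using True Kpos[OF k] by (intro sum.cong) (auto simp: rowp_def rowp0_def)
    also have "\<dots> = f k u - f k v" using uv by (simp add: sum_subtractf)
    finally show ?thesis using True by simp
  qed (simp add: rowp_def rowp0_def)
  have "(\<Sum>(q,j)\<in>K \<times> {..I}. \<alpha> q * (rowp k u v q j * f q j)) = (\<Sum>q\<in>K. \<Sum>j\<le>I. \<alpha> q * (rowp k u v q j * f q j))"
    by (simp add: sum.cartesian_product)
  also have "\<dots> = (\<Sum>q\<in>K. if q = k then f k u - f k v else 0)" by (simp add: inner)
  also have "\<dots> = f k u - f k v" using finK k by simp
  finally show ?thesis .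
qed

lemma Bf0_sw:
  assumes k: "k \<in> K" and r: "r \<in> K" and le: "a \<le> I" "b \<le> I"
  shows "Bf (sw k r a b) 0 = ((ln (x k (b-k) / c (b-k)) + 1) - (ln (x k (a-k) / c (a-k)) + 1)) +
                           ((ln (x r (a-r) / c (a-r)) + 1) - (ln (x r (b-r) / c (b-r)) + 1))"
proof -
  define f where "f q j = ln (x q j / c j) + 1" for q j
  have "Bf (sw k r a b) 0 = (\<Sum>(q,j)\<in>K \<times> {..I}. \<alpha> q * (rowp k (b-k) (a-k) q j * f q j)) +
      (\<Sum>(q,j)\<in>K \<times> {..I}. \<alpha> q * (rowp r (a-r) (b-r) q j * f q j))"
    unfolding Bf_def Tm_def f_def sw_def
    by (subst sum.distrib[symmetric]) (intro sum.cong refl; simp add: case_prod_beta algebra_simps)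
  also have "\<dots> = (f k (b-k) - f k (a-k)) + (f r (a-r) - f r (b-r))"
    using le by (simp add: rowp_sum[OF k] rowp_sum[OF r])
  finally show ?thesis unfolding f_def .
qed

lemma swap_stat:
  assumes k: "k \<in> K" and r: "r \<in> K" and kr: "k \<noteq> r" and ab: "a \<noteq> b"
    and le: "k \<le> a" "k \<le> b" "r \<le> a" "r \<le> b" "a \<le> I" "b \<le> I"
    and p: "0 < x k (a-k)" "0 < x r (b-r)" "0 < x k (b-k)" "0 < x r (a-r)"
  shows "0 \<le> Bf (sw k r a b) 0"
proof (rule ccontr)
  assume "\<not> 0 \<le> Bf (sw k r a b) 0"
  then have neg: "Bf (sw k r a b) 0 < 0" by simp
  have ev: "eventually (\<lambda>\<epsilon>. feas (\<lambda>q j. x q j + \<epsilon> * sw k r a b q j)) (at_right 0)"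
    by (rule swap_evf[OF k r kr ab le p(1,2)])
  have pos: "\<forall>q\<in>K. \<forall>j\<le>I. sw k r a b q j \<noteq> 0 \<longrightarrow> 0 < x q j"
    using sw_nz p by blast
  have nz: "\<forall>q\<in>K. \<forall>j\<le>I. x q j = 0 \<longrightarrow> 0 \<le> sw k r a b q j"
    using pos by force
  show False using descent_main[OF ev caseB[OF pos neg] nz] .
qed

lemma stat:
  assumes k: "k \<in> K" and k0: "k \<noteq> 0" and ki: "k \<le> i" and iI: "i < I" and w: "0 < \<omega> i"
  shows "ln (x k (i-k) / c (i-k)) - ln (x k (I-k) / c (I-k)) = ln (x 0 i / c i) - ln (x 0 I / c I)"
proof -
  have kI: "k \<le> I" using K_le_I[OF k] .
  have p1: "0 < x k (I-k)" using posA[OF k] .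
  have p2: "0 < x 0 i" using posB[OF K0, of i] iI w by simp
  have p3: "0 < x k (i-k)" using posB[OF k, of "i-k"] iI w ki by simp
  have p4: "0 < x 0 I" using posA[OF K0] by simp
  have "0 \<le> Bf (sw k 0 I i) 0"
    by (rule swap_stat[OF k K0 k0]) (use kI ki iI p1 p2 p3 p4 in auto)
  moreover have "0 \<le> Bf (sw k 0 i I) 0"
    by (rule swap_stat[OF k K0 k0]) (use kI ki iI p1 p2 p3 p4 in auto)
  ultimately show ?thesis
    using iI by (simp add: Bf0_sw[OF k K0])
qed

end

lemma ln3: "0 < (A::real) \<Longrightarrow> 0 < B \<Longrightarrow> 0 < C \<Longrightarrow> ln (A * B / C) = ln A + ln B - ln C"
  by (simp add: ln_mult ln_div)

lemma Iset0: "Iset I \<omega> 0 = {i. i \<le> I \<and> 0 < \<omega> i}"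
  by (auto simp: Iset_def)

theorem theoremA9:
  fixes I :: nat and \<beta> :: real and \<alpha> \<omega> :: "nat \<Rightarrow> real" and \<omega>p :: real
    and \<pi>s :: "nat \<Rightarrow> nat \<Rightarrow> real"
  assumes beta_pos: "0 < \<beta>"
    and alpha_simplex: "\<forall>j\<le>Suc I. 0 \<le> \<alpha> j" "(\<Sum>j\<le>Suc I. \<alpha> j) = 1"
    and alpha0: "0 < \<alpha> 0"
    and omega_simplex: "\<forall>j\<le>I. 0 \<le> \<omega> j" "0 \<le> \<omega>p" "(\<Sum>j\<le>I. \<omega> j) + \<omega>p = 1"
    and feasible: "\<forall>i\<le>I. (\<Sum>j\<le>i. \<omega> j) \<le> (\<Sum>j\<le>i. \<alpha> j)"
    and irreducible: "\<forall>i<I. (\<Sum>j\<le>i. \<omega> j) < (\<Sum>j\<le>i. \<alpha> j)"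
    and equality: "(\<Sum>i\<le>I. real i * \<omega> i) + real (Suc I) * \<omega>p
                    = (\<Sum>k\<le>Suc I. real k * \<alpha> k) + \<beta>"
    and convention: "\<omega>p = 0"
    and pis_feasible: "pi_feasible I \<alpha> \<omega> \<beta> \<pi>s"
    and pis_min: "\<forall>\<pi>. pi_feasible I \<alpha> \<omega> \<beta> \<pi> \<longrightarrow> objective I \<alpha> \<beta> \<pi>s \<le> objective I \<alpha> \<beta> \<pi>"
    and pis_unique: "\<forall>\<pi>. pi_feasible I \<alpha> \<omega> \<beta> \<pi> \<and>
                        (\<forall>\<sigma>. pi_feasible I \<alpha> \<omega> \<beta> \<sigma> \<longrightarrow> objective I \<alpha> \<beta> \<pi> \<le> objective I \<alpha> \<beta> \<sigma>)
                        \<longrightarrow> (\<forall>k\<in>Kset I \<alpha>. \<pi> k = \<pi>s k)"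
  shows "\<exists>D W :: nat \<Rightarrow> real.
           (\<forall>k\<in>Kset I \<alpha>. 0 < D k) \<and> (\<forall>i\<in>Iset I \<omega> \<omega>p. 0 < W i) \<and>
           (\<forall>k\<in>Kset I \<alpha>. \<forall>j. \<pi>s k j =
              (if k + j \<in> Iset I \<omega> \<omega>p then D k * poisson j \<beta> * W (k + j) else 0))"
proof -
  interpret A: A9 I \<beta> \<alpha> \<omega> \<pi>s
    by unfold_locales (use beta_pos alpha_simplex alpha0 omega_simplex irreducible convention
        pis_feasible pis_min in auto)
  let ?c = "\<lambda>j. poisson j \<beta>"
  define W where "W i = \<pi>s 0 i / ?c i" for i
  define D where "D k = \<pi>s k (I-k) / (?c (I-k) * W I)" for k
  have cpos: "0 < ?c j" for j using A.c_pos .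
  have WI: "0 < W I" unfolding W_def using A.posA[OF A.K0] cpos by simp
  have Wpos: "0 < W i" if "i \<le> I" "0 < \<omega> i" for i
    unfolding W_def using A.posB[OF A.K0, of i] that cpos by simp
  have Dpos: "0 < D k" if "k \<in> Kset I \<alpha>" for k
    unfolding D_def using A.posA[OF that] cpos WI by simp
  have val: "\<pi>s k j = D k * ?c j * W (k + j)" if k: "k \<in> Kset I \<alpha>" and i: "k + j \<le> I" and w: "0 < \<omega> (k + j)" for k j
  proof -
    have p1: "0 < \<pi>s k (I-k)" using A.posA[OF k] .
    have p2: "0 < \<pi>s 0 (k+j)" using A.posB[OF A.K0, of "k+j"] i w by simp
    have p3: "0 < \<pi>s k j" using A.posB[OF k i w] .
    have p4: "0 < \<pi>s 0 I" using A.posA[OF A.K0] by simp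
    consider "k = 0" | "k + j = I" | "k \<noteq> 0" "k + j < I" using i by linarith
    then show ?thesis
    proof cases
      case 1 then show ?thesis using cpos[of I] cpos[of j] p4 by (simp add: D_def W_def)
    next
      case 2
      then have "j = I - k" by simp
      then show ?thesis using cpos[of I] cpos[of j] WI 2 p1 p4 by (simp add: D_def W_def)
    next
      case 3
      have "ln (\<pi>s k j / ?c j) = ln (\<pi>s k (I-k) / ?c (I-k)) + ln (\<pi>s 0 (k+j) / ?c (k+j)) - ln (\<pi>s 0 I / ?c I)"
        using A.stat[OF k 3(1) _ 3(2) w] by simp
      also have "\<dots> = ln ((\<pi>s k (I-k) / ?c (I-k)) * (\<pi>s 0 (k+j) / ?c (k+j)) / (\<pi>s 0 I / ?c I))"
        using ln3[OF divide_pos_pos[OF p1 cpos] divide_pos_pos[OF p2 cpos] divide_pos_pos[OF p4 cpos]] by simp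
      finally have "\<pi>s k j / ?c j = (\<pi>s k (I-k) / ?c (I-k)) * (\<pi>s 0 (k+j) / ?c (k+j)) / (\<pi>s 0 I / ?c I)"
        using p1 p2 p3 p4 cpos by (subst (asm) ln_inj_iff) auto
      then show ?thesis using cpos[of j] by (simp add: D_def W_def field_simps)
    qed
  qed
  have zero: "\<pi>s k j = 0" if k: "k \<in> Kset I \<alpha>" and n: "k + j \<notin> Iset I \<omega> \<omega>p" for k j
  proof (cases "k + j \<le> I")
    case False then show ?thesis using A.feas_supp[OF pis_feasible k] by simp
  next
    case True
    then have "\<omega> (k + j) = 0" using n omega_simplex(1) convention by (force simp: Iset_def)
    then have s: "(\<Sum>q\<in>{q\<in>Kset I \<alpha>. q\<le>k+j}. \<alpha> q * \<pi>s q (k + j - q)) = 0"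
      using A.feasD(5)[OF pis_feasible True] by simp
    have nn: "\<forall>q\<in>{q\<in>Kset I \<alpha>. q\<le>k+j}. 0 \<le> \<alpha> q * \<pi>s q (k + j - q)"
      by (intro ballI mult_nonneg_nonneg less_imp_le[OF A.Kpos] A.x_nonneg) auto
    have "\<alpha> k * \<pi>s k (k + j - k) = 0"
      using s nn A.finK k sum_nonneg_eq_0_iff[of "{q\<in>Kset I \<alpha>. q\<le>k+j}" "\<lambda>q. \<alpha> q * \<pi>s q (k + j - q)"]
      by auto
    then show ?thesis using A.Kpos[OF k] by simp
  qed
  show ?thesis
  proof (intro exI conjI ballI allI)
    show "0 < D k" if "k \<in> Kset I \<alpha>" for k using Dpos that .
    show "0 < W i" if "i \<in> Iset I \<omega> \<omega>p" for i using Wpos that convention by (auto simp: Iset_def)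
    fix k j assume k: "k \<in> Kset I \<alpha>"
    show "\<pi>s k j = (if k + j \<in> Iset I \<omega> \<omega>p then D k * poisson j \<beta> * W (k + j) else 0)"
      using val[OF k] zero[OF k] convention by (auto simp: Iset_def)
  qed
qed

end
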